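(* Let $n\geq 2$ and let $L'_n$ be the graph of the $\alpha,\omega$-dicyclobutadieno derivative of $[n-1]$-phenylene (defined in the context). Then the base polynomial counting distances between pairs consisting of a degree-2 vertex and a degree-3 vertex of $L'_n$ is \begin{eqnarray*} H^{2,3}_{b}(L'_{n}) &=& 4nx+4\sum_{k=2}^{n-1}(n-k+2)x^{3k-2}+4\sum_{k=1}^{n-1}(2n-2k)x^{3k-1}\\ &&+4\sum_{k=1}^{n-1}(n-k)x^{3k}+4x^{3n-2}. \end{eqnarray*}
   Context: All graphs are finite, simple and connected; $d(u,v)$ denotes the shortest-path distance and $d_u$ the degree of a vertex $u$. For a graph $G$ and degrees $p\le q$, the base polynomial is $H^{p,q}_{b}(G)=\sum x^{d(u,v)}$, where the sum runs over all unordered pairs $\{u,v\}$ of distinct vertices of $G$ such that one of $u,v$ has degree $p$ and the other has degree $q$. Construction of $L'_n$ ($n\ge 2$): take $n-1$ hexagons $H_1,\dots,H_{n-1}$, hexagon $H_i$ being the 6-cycle $a_i b_i c_i d_i e_i f_i a_i$, and for $i=1,\dots,n-2$ add edges $b_i f_{i+1}$ and $c_i e_{i+1}$ (so consecutive hexagons are joined by the 4-cycle $b_i c_i e_{i+1} f_{i+1}$). Then add four new vertices $p,q,r,s$ with edges $pq$, $pf_1$, $qe_1$ (forming the 4-cycle $f_1 e_1 q p$) and $rs$, $rb_{n-1}$, $sc_{n-1}$ (forming the 4-cycle $b_{n-1} c_{n-1} s r$). Thus $L'_n$ has $n-1$ hexagons and $n$ squares, $2n+2$ vertices of degree 2 and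 $4n-4$ vertices of degree 3. *)

theory Defs
  imports "HOL-Computational_Algebra.Polynomial"
begin

definition is_walk :: "'a set \<Rightarrow> ('a \<Rightarrow> 'a \<Rightarrow> bool) \<Rightarrow> 'a list \<Rightarrow> 'a \<Rightarrow> 'a \<Rightarrow> bool" where
  "is_walk V E xs u v \<longleftrightarrow> xs \<noteq> [] \<and> hd xs = u \<and> last xs = v \<and> set xs \<subseteq> V \<and>
     (\<forall>i < length xs - 1. E (xs ! i) (xs ! Suc i))"

definition gdist :: "'a set \<Rightarrow> ('a \<Rightarrow> 'a \<Rightarrow> bool) \<Rightarrow> 'a \<Rightarrow> 'a \<Rightarrow> nat" where
  "gdist V E u v = (LEAST k. \<exists>xs. is_walk V E xs u v \<and> length xs = Suc k)"

definition gdeg :: "'a set \<Rightarrow> ('a \<Rightarrow> 'a \<Rightarrow> bool) \<Rightarrow> 'a \<Rightarrow> nat" where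
  "gdeg V E u = card {v \<in> V. E u v}"

definition deg_pairs :: "'a set \<Rightarrow> ('a \<Rightarrow> 'a \<Rightarrow> bool) \<Rightarrow> nat \<Rightarrow> nat \<Rightarrow> 'a set set" where
  "deg_pairs V E p q = {{u, v} | u v. u \<in> V \<and> v \<in> V \<and> u \<noteq> v \<and>
      gdeg V E u = p \<and> gdeg V E v = q}"

definition base_poly :: "'a set \<Rightarrow> ('a \<Rightarrow> 'a \<Rightarrow> bool) \<Rightarrow> nat \<Rightarrow> nat \<Rightarrow> nat poly" where
  "base_poly V E p q = (\<Sum>e \<in> deg_pairs V E p q.
      monom 1 (THE k. \<exists>u v. e = {u, v} \<and> k = gdist V E u v))"

datatype vtx = Av nat | Bv nat | Cv nat | Dv nat | Ev nat | Fv nat | Pv | Qv | Rv | Sv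

definition Lverts :: "nat \<Rightarrow> vtx set" where
  "Lverts n = (\<Union>i\<in>{1..n-1}. {Av i, Bv i, Cv i, Dv i, Ev i, Fv i}) \<union> {Pv, Qv, Rv, Sv}"

definition Ledges :: "nat \<Rightarrow> (vtx \<times> vtx) set" where
  "Ledges n =
     (\<Union>i\<in>{1..n-1}. {(Av i, Bv i), (Bv i, Cv i), (Cv i, Dv i), (Dv i, Ev i), (Ev i, Fv i), (Fv i, Av i)})
   \<union> (\<Union>i\<in>{1..n-2}. {(Bv i, Fv (Suc i)), (Cv i, Ev (Suc i))})
   \<union> {(Pv, Qv), (Pv, Fv 1), (Qv, Ev 1), (Rv, Sv), (Rv, Bv (n-1)), (Sv, Cv (n-1))}"

definition Ladj :: "nat \<Rightarrow> vtx \<Rightarrow> vtx \<Rightarrow> bool" where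
  "Ladj n u v \<longleftrightarrow> (u, v) \<in> Ledges n \<or> (v, u) \<in> Ledges n"

end

theory Submission
  imports Defs
begin


lemma walk_D_le:
  assumes w: "is_walk V E xs u v"
    and lip: "\<And>y z. y \<in> V \<Longrightarrow> z \<in> V \<Longrightarrow> E y z \<Longrightarrow> D z \<le> D y + 1"
    and d0: "D u = 0"
  shows "i < length xs \<Longrightarrow> D (xs ! i) \<le> i"
proof (induction i)
  case 0
  then show ?case using w d0 by (auto simp: is_walk_def hd_conv_nth)
next
  case (Suc i)
  have e: "E (xs!i) (xs!Suc i)" using w Suc.prems by (auto simp: is_walk_def)
  have "xs!i \<in> V" "xs!Suc i \<in> V" using w Suc.prems by (auto simp: is_walk_def dest: nth_mem)
  then have "D (xs!Suc i) \<le> D (xs!i) + 1" using lip e by blast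
  then show ?case using Suc by simp
qed

lemma walk_len_ge:
  assumes w: "is_walk V E xs u v"
    and lip: "\<And>y z. y \<in> V \<Longrightarrow> z \<in> V \<Longrightarrow> E y z \<Longrightarrow> D z \<le> D y + 1"
    and d0: "D u = 0"
  shows "D v < length xs"
proof -
  have ne: "xs \<noteq> []" and lv: "last xs = v" using w by (auto simp: is_walk_def)
  have "D (xs ! (length xs - 1)) \<le> length xs - 1"
    using walk_D_le[of V E xs u v D "length xs - 1", OF w lip d0] ne by simp
  then show ?thesis using ne lv by (cases xs) (auto simp: last_conv_nth)
qed

lemma walk_exists:
  assumes uV: "u \<in> V" and z0: "\<And>v. v \<in> V \<Longrightarrow> D v = 0 \<Longrightarrow> v = u"
    and pred: "\<And>y. y \<in> V \<Longrightarrow> D y > 0 \<Longrightarrow> \<exists>z\<in>V. E z y \<and> D z + 1 = D y"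
  shows "v \<in> V \<Longrightarrow> D v = k \<Longrightarrow> \<exists>xs. is_walk V E xs u v \<and> length xs = Suc k"
proof (induction k arbitrary: v)
  case 0
  then have "v = u" using z0 by auto
  then show ?case using uV by (intro exI[of _ "[u]"]) (auto simp: is_walk_def)
next
  case (Suc k)
  then obtain z where z: "z \<in> V" "E z v" "D z + 1 = D v" using pred[of v] by auto
  then obtain xs where xs: "is_walk V E xs u z" "length xs = Suc k" using Suc.IH[of z] Suc.prems by auto
  have ne: "xs \<noteq> []" "hd xs = u" "last xs = z" "set xs \<subseteq> V"
    and ed: "\<forall>i < length xs - 1. E (xs ! i) (xs ! Suc i)" using xs(1) by (auto simp: is_walk_def)
  have "\<forall>i < length (xs @ [v]) - 1. E ((xs @ [v]) ! i) ((xs @ [v]) ! Suc i)"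
  proof (intro allI impI)
    fix i assume i: "i < length (xs @ [v]) - 1"
    show "E ((xs @ [v]) ! i) ((xs @ [v]) ! Suc i)"
    proof (cases "Suc i < length xs")
      case True then show ?thesis using ed by (auto simp: nth_append)
    next
      case False
      then have "i = length xs - 1" using i by auto
      then show ?thesis using ne z by (auto simp: nth_append last_conv_nth)
    qed
  qed
  then have "is_walk V E (xs @ [v]) u v" using ne Suc.prems unfolding is_walk_def by auto
  then show ?case using xs by auto
qed

lemma gdist_char:
  assumes uV: "u \<in> V" and vV: "v \<in> V"
    and d0: "D u = 0"
    and z0: "\<And>v. v \<in> V \<Longrightarrow> D v = 0 \<Longrightarrow> v = u"
    and lip: "\<And>y z. y \<in> V \<Longrightarrow> z \<in> V \<Longrightarrow> E y z \<Longrightarrow> D z \<le> D y + 1"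
    and pred: "\<And>y. y \<in> V \<Longrightarrow> D y > 0 \<Longrightarrow> \<exists>z\<in>V. E z y \<and> D z + 1 = D y"
  shows "gdist V E u v = D v"
  unfolding gdist_def
proof (rule Least_equality)
  show "\<exists>xs. is_walk V E xs u v \<and> length xs = Suc (D v)"
    using walk_exists[OF uV z0 pred vV refl] .
next
  fix k assume "\<exists>xs. is_walk V E xs u v \<and> length xs = Suc k"
  then obtain xs where "is_walk V E xs u v" "length xs = Suc k" by blast
  then show "D v \<le> k" using walk_len_ge[of V E xs u v D] lip d0 by fastforce
qed

lemma walk_map:
  assumes "is_walk V E xs u v" "f ` V \<subseteq> W" "\<And>x y. x\<in>V \<Longrightarrow> y\<in>V \<Longrightarrow> E x y \<Longrightarrow> E' (f x) (f y)"
  shows "is_walk W E' (map f xs) (f u) (f v)"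
proof -
  have ne: "xs \<noteq> []" "hd xs = u" "last xs = v" "set xs \<subseteq> V"
    and ed: "\<forall>i < length xs - 1. E (xs ! i) (xs ! Suc i)" using assms(1) by (auto simp: is_walk_def)
  have "\<forall>i < length xs - 1. E' (map f xs ! i) (map f xs ! Suc i)"
  proof (intro allI impI)
    fix i assume i: "i < length xs - 1"
    then have "xs ! i \<in> V" "xs ! Suc i \<in> V" using ne(4) by (auto dest!: nth_mem)
    then show "E' (map f xs ! i) (map f xs ! Suc i)" using ed i assms(3) by auto
  qed
  then show ?thesis using ne assms(2) unfolding is_walk_def by (auto simp: hd_map last_map)
qed

lemma gdist_iso:
  assumes bij: "bij_betw f V W" and adj: "\<And>x y. x\<in>V \<Longrightarrow> y\<in>V \<Longrightarrow> E x y = E' (f x) (f y)"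
    and uv: "u \<in> V" "v \<in> V"
  shows "gdist V E u v = gdist W E' (f u) (f v)"
proof -
  define g where "g = inv_into V f"
  have inj: "inj_on f V" and im: "f ` V = W" using bij by (auto simp: bij_betw_def)
  have gW: "g ` W \<subseteq> V" unfolding g_def using im by (auto intro: inv_into_into)
  have fg: "\<And>w. w \<in> W \<Longrightarrow> f (g w) = w" unfolding g_def using im by (auto intro: f_inv_into_f)
  have gf: "\<And>x. x \<in> V \<Longrightarrow> g (f x) = x" unfolding g_def using inj by auto
  have "(\<exists>xs. is_walk V E xs u v \<and> length xs = Suc k) = (\<exists>ys. is_walk W E' ys (f u) (f v) \<and> length ys = Suc k)" for k
  proof
    assume "\<exists>xs. is_walk V E xs u v \<and> length xs = Suc k"
    then obtain xs where "is_walk V E xs u v" "length xs = Suc k" by blast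
    then show "\<exists>ys. is_walk W E' ys (f u) (f v) \<and> length ys = Suc k"
      using walk_map[of V E xs u v f W E'] im adj by (intro exI[of _ "map f xs"]) auto
  next
    assume "\<exists>ys. is_walk W E' ys (f u) (f v) \<and> length ys = Suc k"
    then obtain ys where ys: "is_walk W E' ys (f u) (f v)" "length ys = Suc k" by blast
    have "E (g x) (g y)" if "x \<in> W" "y \<in> W" "E' x y" for x y
      using adj[of "g x" "g y"] that gW fg by auto
    then have "is_walk V E (map g ys) (g (f u)) (g (f v))"
      using walk_map[of W E' ys "f u" "f v" g V E] ys gW by blast
    then show "\<exists>xs. is_walk V E xs u v \<and> length xs = Suc k"
      using gf uv ys by (intro exI[of _ "map g ys"]) auto
  qed
  then show ?thesis unfolding gdist_def by simp
qed

lemma gdeg_iso: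
  assumes bij: "bij_betw f V W" and adj: "\<And>x y. x\<in>V \<Longrightarrow> y\<in>V \<Longrightarrow> E x y = E' (f x) (f y)"
    and u: "u \<in> V"
  shows "gdeg W E' (f u) = gdeg V E u"
proof -
  have inj: "inj_on f V" and im: "f ` V = W" using bij by (auto simp: bij_betw_def)
  have "{w \<in> W. E' (f u) w} = f ` {v \<in> V. E u v}" using adj u im by auto
  moreover have "inj_on f {v \<in> V. E u v}" using inj by (auto intro: inj_on_subset)
  ultimately show ?thesis unfolding gdeg_def by (simp add: card_image)
qed

lemma base_poly_split:
  assumes pq: "p \<noteq> q"
    and sym: "\<And>x y. x\<in>V \<Longrightarrow> y\<in>V \<Longrightarrow> gdist V E x y = gdist V E y x"
  shows "base_poly V E p q = (\<Sum>x\<in>{v\<in>V. gdeg V E v = p}. \<Sum>y\<in>{v\<in>V. gdeg V E v = q}. monom 1 (gdist V E x y))"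
proof -
  let ?A = "{v\<in>V. gdeg V E v = p}" and ?B = "{v\<in>V. gdeg V E v = q}"
  have dp: "deg_pairs V E p q = (\<lambda>(x,y). {x,y}) ` (?A \<times> ?B)"
    unfolding deg_pairs_def using pq by auto
  have inj: "inj_on (\<lambda>(x,y). {x,y}) (?A \<times> ?B)"
    using pq by (auto simp: inj_on_def doubleton_eq_iff)
  have th: "(THE k. \<exists>u v. {x,y} = {u, v} \<and> k = gdist V E u v) = gdist V E x y"
    if "(x,y) \<in> ?A \<times> ?B" for x y
    using that sym by (intro the_equality) (auto simp: doubleton_eq_iff)
  have "base_poly V E p q = (\<Sum>(x,y)\<in>?A \<times> ?B. monom 1 (THE k. \<exists>u v. {x,y} = {u, v} \<and> k = gdist V E u v))"
    unfolding base_poly_def dp by (subst sum.reindex[OF inj]) (simp add: case_prod_beta)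
  also have "\<dots> = (\<Sum>(x,y)\<in>?A \<times> ?B. monom 1 (gdist V E x y))"
    by (rule sum.cong) (auto simp: th)
  also have "\<dots> = (\<Sum>x\<in>?A. \<Sum>y\<in>?B. monom 1 (gdist V E x y))"
    by (rule sum.cartesian_product[symmetric])
  finally show ?thesis .
qed

definition LW :: "nat \<Rightarrow> (nat \<times> bool) set" where "LW m = {0..m} \<times> UNIV"

definition ladj :: "nat \<times> bool \<Rightarrow> nat \<times> bool \<Rightarrow> bool" where
  "ladj x y \<longleftrightarrow> (snd x = snd y \<and> (fst y = Suc (fst x) \<or> fst x = Suc (fst y)))
     \<or> (snd x \<noteq> snd y \<and> fst x = fst y \<and> fst x mod 3 \<noteq> 2)"

definition ndist :: "nat \<Rightarrow> nat \<Rightarrow> nat" where "ndist p q = (p - q) + (q - p)"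

definition ldist :: "nat \<times> bool \<Rightarrow> nat \<times> bool \<Rightarrow> nat" where
  "ldist x y = (if snd x = snd y then ndist (fst x) (fst y)
     else if fst x = fst y \<and> fst x mod 3 = 2 then 3 else ndist (fst x) (fst y) + 1)"

lemma ldist_sym: "ldist x y = ldist y x"
  unfolding ldist_def ndist_def by auto

lemma ladder_lip:
  assumes "ladj y z"
  shows "ldist x z \<le> ldist x y + 1"
  using assms unfolding ladj_def ldist_def ndist_def
  by (cases x; cases y; cases z) (auto split: if_splits)

lemma ladder_pred:
  assumes m: "m mod 3 = 1" and x: "x \<in> LW m" and y: "y \<in> LW m" and pos: "ldist x y > 0"
  shows "\<exists>z\<in>LW m. ladj z y \<and> ldist x z + 1 = ldist x y"
proof -
  obtain p r where xp: "x = (p, r)" by (cases x)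
  obtain q s where yq: "y = (q, s)" by (cases y)
  have pm: "p \<le> m" "q \<le> m" using x y xp yq by (auto simp: LW_def)
  show ?thesis
  proof (cases "s = r")
    case True
    then have "q \<noteq> p" using pos xp yq by (auto simp: ldist_def ndist_def)
    show ?thesis
    proof (cases "p < q")
      case True
      then show ?thesis using \<open>s = r\<close> xp yq pm
        by (intro bexI[of _ "(q - 1, s)"]) (auto simp: LW_def ladj_def ldist_def ndist_def)
    next
      case False
      then show ?thesis using \<open>s = r\<close> \<open>q \<noteq> p\<close> xp yq pm
        by (intro bexI[of _ "(q + 1, s)"]) (auto simp: LW_def ladj_def ldist_def ndist_def)
    qed
  next
    case sr: False
    show ?thesis
    proof (cases "q = p")
      case True
      show ?thesis
      proof (cases "p mod 3 = 2")
        case True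
        then have "p \<noteq> m" using m by auto
        then have "p < m" using pm by simp
        then show ?thesis using True sr \<open>q = p\<close> xp yq pm
          by (intro bexI[of _ "(Suc p, s)"]) (auto simp: LW_def ladj_def ldist_def ndist_def)
      next
        case False
        then show ?thesis using sr \<open>q = p\<close> xp yq pm
          by (intro bexI[of _ "(p, r)"]) (auto simp: LW_def ladj_def ldist_def ndist_def)
      qed
    next
      case qp: False
      show ?thesis
      proof (cases "p < q")
        case True
        show ?thesis
        proof (cases "q = Suc p \<and> p mod 3 = 2")
          case True
          then have "q mod 3 \<noteq> 2" by presburger
          then show ?thesis using True sr xp yq pm
            by (intro bexI[of _ "(q, r)"]) (auto simp: LW_def ladj_def ldist_def ndist_def)
        next
          case False
          then show ?thesis using \<open>p < q\<close> sr xp yq pm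
            by (intro bexI[of _ "(q - 1, s)"]) (auto simp: LW_def ladj_def ldist_def ndist_def)
        qed
      next
        case False
        then have "q < p" using qp by simp
        show ?thesis
        proof (cases "p = Suc q \<and> p mod 3 = 2")
          case True
          then have "q mod 3 \<noteq> 2" by presburger
          then show ?thesis using True sr xp yq pm
            by (intro bexI[of _ "(q, r)"]) (auto simp: LW_def ladj_def ldist_def ndist_def)
        next
          case False
          then show ?thesis using \<open>q < p\<close> sr xp yq pm
            by (intro bexI[of _ "(q + 1, s)"]) (auto simp: LW_def ladj_def ldist_def ndist_def)
        qed
      qed
    qed
  qed
qed

lemma ladder_gdist:
  assumes m: "m mod 3 = 1" and x: "x \<in> LW m" and y: "y \<in> LW m"
  shows "gdist (LW m) ladj x y = ldist x y"
proof (rule gdist_char[OF x y])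
  show "ldist x x = 0" by (simp add: ldist_def ndist_def)
  show "v = x" if "v \<in> LW m" "ldist x v = 0" for v
    using that by (cases x; cases v) (auto simp: ldist_def ndist_def split: if_splits)
  show "ldist x z \<le> ldist x y + 1" if "ladj y z" for y z using ladder_lip[OF that] .
  show "\<exists>z\<in>LW m. ladj z y \<and> ldist x z + 1 = ldist x y" if "y \<in> LW m" "ldist x y > 0" for y
    using ladder_pred[OF m x that] .
qed

lemma ladder_deg:
  assumes m: "m mod 3 = 1" and x: "(p, r) \<in> LW m"
  shows "gdeg (LW m) ladj (p, r) = (if p = 0 \<or> p = m \<or> p mod 3 = 2 then 2 else 3)"
proof -
  have pm: "p \<le> m" using x by (auto simp: LW_def)
  have m0: "m \<noteq> 0" using m by auto
  consider "p = 0" | "p = m" | "0 < p" "p < m" "p mod 3 = 2" | "0 < p" "p < m" "p mod 3 \<noteq> 2"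
    using pm by linarith
  then show ?thesis
  proof cases
    case 1
    then have "{v \<in> LW m. ladj (p, r) v} = {(1, r), (0, \<not> r)}"
      using m0 by (auto simp: LW_def ladj_def)
    then show ?thesis using 1 unfolding gdeg_def by simp
  next
    case 2
    then have "{v \<in> LW m. ladj (p, r) v} = {(m - 1, r), (m, \<not> r)}"
      using m0 m by (auto simp: LW_def ladj_def)
    then show ?thesis using 2 unfolding gdeg_def by simp
  next
    case 3
    then have "{v \<in> LW m. ladj (p, r) v} = {(p - 1, r), (p + 1, r)}"
      by (auto simp: LW_def ladj_def)
    then show ?thesis using 3 unfolding gdeg_def by simp
  next
    case 4
    then have "{v \<in> LW m. ladj (p, r) v} = {(p - 1, r), (p + 1, r), (p, \<not> r)}"
      by (auto simp: LW_def ladj_def)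
    then show ?thesis using 4 unfolding gdeg_def by simp
  qed
qed

fun lpos :: "nat \<Rightarrow> vtx \<Rightarrow> nat \<times> bool" where
  "lpos n (Av i) = (3*i - 1, True)" | "lpos n (Bv i) = (3*i, True)" | "lpos n (Cv i) = (3*i, False)"
| "lpos n (Dv i) = (3*i - 1, False)" | "lpos n (Ev i) = (3*i - 2, False)" | "lpos n (Fv i) = (3*i - 2, True)"
| "lpos n Pv = (0, True)" | "lpos n Qv = (0, False)" | "lpos n Rv = (3*n - 2, True)" | "lpos n Sv = (3*n - 2, False)"

fun vok :: "nat \<Rightarrow> vtx \<Rightarrow> bool" where
  "vok n (Av i) = (1 \<le> i \<and> i < n)" | "vok n (Bv i) = (1 \<le> i \<and> i < n)" | "vok n (Cv i) = (1 \<le> i \<and> i < n)"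
| "vok n (Dv i) = (1 \<le> i \<and> i < n)" | "vok n (Ev i) = (1 \<le> i \<and> i < n)" | "vok n (Fv i) = (1 \<le> i \<and> i < n)"
| "vok n _ = True"

lemma Lverts_iff: "v \<in> Lverts n \<longleftrightarrow> vok n v"
  by (cases v) (auto simp: Lverts_def)

lemma lpos_inj0: "n \<ge> 2 \<Longrightarrow> vok n u \<Longrightarrow> vok n v \<Longrightarrow> lpos n u = lpos n v \<Longrightarrow> u = v"
  apply (cases u; cases v)
  apply simp_all
  apply presburger+
  done

lemma lpos_into: "n \<ge> 2 \<Longrightarrow> vok n u \<Longrightarrow> lpos n u \<in> LW (3*n-2)"
  by (cases u) (auto simp: LW_def)

lemma lpos_onto:
  assumes n: "n \<ge> 2" and x: "x \<in> LW (3*n-2)"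
  shows "\<exists>u. vok n u \<and> lpos n u = x"
proof -
  obtain p r where xp: "x = (p, r)" by (cases x)
  have pm: "p \<le> 3*n-2" using x xp by (auto simp: LW_def)
  consider "p = 0" | "p = 3*n-2" | "0 < p" "p < 3*n-2" "p mod 3 = 1"
    | "0 < p" "p < 3*n-2" "p mod 3 = 2" | "0 < p" "p < 3*n-2" "p mod 3 = 0"
    using pm by linarith
  then show ?thesis
  proof cases
    case 1 then show ?thesis using xp by (intro exI[of _ "if r then Pv else Qv"]) auto
  next
    case 2 then show ?thesis using xp by (intro exI[of _ "if r then Rv else Sv"]) auto
  next
    case 3
    then have "3 * ((p + 2) div 3) - 2 = p" "1 \<le> (p + 2) div 3" "(p + 2) div 3 < n" by presburger+
    then show ?thesis using xp
      by (intro exI[of _ "if r then Fv ((p + 2) div 3) else Ev ((p + 2) div 3)"]) auto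
  next
    case 4
    then have "3 * ((p + 1) div 3) - 1 = p" "1 \<le> (p + 1) div 3" "(p + 1) div 3 < n" by presburger+
    then show ?thesis using xp
      by (intro exI[of _ "if r then Av ((p + 1) div 3) else Dv ((p + 1) div 3)"]) auto
  next
    case 5
    then have "3 * (p div 3) = p" "1 \<le> p div 3" "p div 3 < n" by presburger+
    then show ?thesis using xp
      by (intro exI[of _ "if r then Bv (p div 3) else Cv (p div 3)"]) auto
  qed
qed

lemma lpos_bij: assumes n: "n \<ge> 2" shows "bij_betw (lpos n) (Lverts n) (LW (3*n-2))"
  unfolding bij_betw_def
proof
  show "inj_on (lpos n) (Lverts n)" unfolding inj_on_def using lpos_inj0[OF n] by (auto simp: Lverts_iff)
  show "lpos n ` Lverts n = LW (3 * n - 2)"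
  proof
    show "lpos n ` Lverts n \<subseteq> LW (3 * n - 2)" using lpos_into[OF n] by (auto simp: Lverts_iff)
    show "LW (3 * n - 2) \<subseteq> lpos n ` Lverts n"
    proof
      fix x assume "x \<in> LW (3 * n - 2)"
      then obtain u where "vok n u" "lpos n u = x" using lpos_onto[OF n] by blast
      then show "x \<in> lpos n ` Lverts n" by (auto simp: Lverts_iff)
    qed
  qed
qed


lemma mod3_facts:
  "1 \<le> i \<Longrightarrow> (3*i - 2) mod 3 = (1::nat)"
  "1 \<le> i \<Longrightarrow> (3*i - 1) mod 3 = (2::nat)"
  "(3*i) mod 3 = (0::nat)"
  "1 \<le> i \<Longrightarrow> (3*i - Suc 0) mod 3 = (2::nat)"
  "1 \<le> i \<Longrightarrow> (3*i - Suc (Suc 0)) mod 3 = (1::nat)"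
  by (cases i; simp add: mod_Suc)+

lemma Ledges_cases:
  assumes "(u, v) \<in> Ledges n"
  obtains (h) i where "1 \<le> i" "i \<le> n-1" "(u,v) \<in> {(Av i, Bv i), (Bv i, Cv i), (Cv i, Dv i), (Dv i, Ev i), (Ev i, Fv i), (Fv i, Av i)}"
    | (c) i where "1 \<le> i" "i \<le> n-2" "(u,v) \<in> {(Bv i, Fv (Suc i)), (Cv i, Ev (Suc i))}"
    | (e) "(u,v) \<in> {(Pv, Qv), (Pv, Fv 1), (Qv, Ev 1), (Rv, Sv), (Rv, Bv (n-1)), (Sv, Cv (n-1))}"
  using assms unfolding Ledges_def Un_iff UN_iff atLeastAtMost_iff
  apply (elim disjE bexE)
    apply (rule that(1); simp)
   apply (rule that(2); simp)
  apply (rule that(3); simp)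
  done

lemma Ledges_ladj:
  assumes n: "n \<ge> 2" and e: "(u, v) \<in> Ledges n"
  shows "ladj (lpos n u) (lpos n v)"
  using e
proof (cases rule: Ledges_cases)
  case (h i)
  then show ?thesis
    apply (simp only: insert_iff empty_iff prod.inject)
    apply (elim disjE conjE)
    apply (simp_all add: ladj_def mod3_facts)
    apply arith+
    done
next
  case (c i)
  then show ?thesis
    apply (simp only: insert_iff empty_iff prod.inject)
    apply (elim disjE conjE)
    apply (simp_all add: ladj_def mod3_facts)
    done
next
  case e
  then show ?thesis using n
    apply (simp only: insert_iff empty_iff prod.inject)
    apply (elim disjE conjE)
    apply (simp_all add: ladj_def mod3_facts)
    apply arith+
    done
qed

lemma hex_edge: "1 \<le> i \<Longrightarrow> i < n \<Longrightarrow> p \<in> {(Av i, Bv i), (Bv i, Cv i), (Cv i, Dv i), (Dv i, Ev i), (Ev i, Fv i), (Fv i, Av i)} \<Longrightarrow> p \<in> Ledges n"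
  unfolding Ledges_def by (intro UnI1) (rule UN_I[of i]; simp)

lemma con_edge: "1 \<le> i \<Longrightarrow> Suc i < n \<Longrightarrow> p \<in> {(Bv i, Fv (Suc i)), (Cv i, Ev (Suc i))} \<Longrightarrow> p \<in> Ledges n"
  unfolding Ledges_def by (intro UnI1 UnI2) (rule UN_I[of i]; simp)

lemma end_edge: "p \<in> {(Pv, Qv), (Pv, Fv 1), (Qv, Ev 1), (Rv, Sv), (Rv, Bv (n-1)), (Sv, Cv (n-1))} \<Longrightarrow> p \<in> Ledges n"
  unfolding Ledges_def by (intro UnI2)

lemma Ladj_sym: "Ladj n u v = Ladj n v u" unfolding Ladj_def by auto

lemma Ladj_intros:
  "1 \<le> i \<Longrightarrow> i < n \<Longrightarrow> Ladj n (Av i) (Bv i)"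
  "1 \<le> i \<Longrightarrow> i < n \<Longrightarrow> Ladj n (Bv i) (Cv i)"
  "1 \<le> i \<Longrightarrow> i < n \<Longrightarrow> Ladj n (Cv i) (Dv i)"
  "1 \<le> i \<Longrightarrow> i < n \<Longrightarrow> Ladj n (Dv i) (Ev i)"
  "1 \<le> i \<Longrightarrow> i < n \<Longrightarrow> Ladj n (Ev i) (Fv i)"
  "1 \<le> i \<Longrightarrow> i < n \<Longrightarrow> Ladj n (Fv i) (Av i)"
  "1 \<le> i \<Longrightarrow> Suc i < n \<Longrightarrow> Ladj n (Bv i) (Fv (Suc i))"
  "1 \<le> i \<Longrightarrow> Suc i < n \<Longrightarrow> Ladj n (Cv i) (Ev (Suc i))"
  "Ladj n Pv Qv" "Ladj n Pv (Fv 1)" "Ladj n Qv (Ev 1)" "Ladj n Rv Sv" "Ladj n Rv (Bv (n-1))" "Ladj n Sv (Cv (n-1))"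
  unfolding Ladj_def
  by (meson hex_edge con_edge end_edge insertI1 insertI2)+

lemma nbr:
  assumes n: "n \<ge> 2" and u: "vok n u" and y: "y \<in> LW (3*n-2)" and l: "ladj (lpos n u) y"
  shows "\<exists>w. vok n w \<and> Ladj n u w \<and> lpos n w = y"
proof -
  obtain a b where ab: "y = (a, b)" by (cases y)
  have am: "a \<le> 3*n-2" using y ab by (simp add: LW_def)
  show ?thesis
  proof (cases u)
    case (Av i)
    then have i: "1 \<le> i" "i < n" using u by auto
    have "b = True \<and> (a = 3*i \<or> a = 3*i-2)" using l Av ab i by (simp add: ladj_def mod3_facts) arith
    then show ?thesis
    proof (elim conjE disjE)
      assume "b = True" "a = 3*i" then show ?thesis using Av ab i Ladj_intros
        by (intro exI[of _ "Bv i"]) auto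
    next
      assume "b = True" "a = 3*i-2" then show ?thesis using Av ab i Ladj_intros Ladj_sym
        by (intro exI[of _ "Fv i"]) auto
    qed
  next
    case (Dv i)
    then have i: "1 \<le> i" "i < n" using u by auto
    have "b = False \<and> (a = 3*i \<or> a = 3*i-2)" using l Dv ab i by (simp add: ladj_def mod3_facts) arith
    then show ?thesis
    proof (elim conjE disjE)
      assume "b = False" "a = 3*i" then show ?thesis using Dv ab i Ladj_intros Ladj_sym
        by (intro exI[of _ "Cv i"]) auto
    next
      assume "b = False" "a = 3*i-2" then show ?thesis using Dv ab i Ladj_intros
        by (intro exI[of _ "Ev i"]) auto
    qed
  next
    case (Bv i)
    then have i: "1 \<le> i" "i < n" using u by auto
    have "(b = True \<and> (a = 3*i+1 \<or> a = 3*i-1)) \<or> (b = False \<and> a = 3*i)"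
      using l Bv ab i by (simp add: ladj_def mod3_facts) arith
    then show ?thesis
    proof (elim conjE disjE)
      assume "b = True" "a = 3*i+1"
      show ?thesis
      proof (cases "Suc i < n")
        case True then show ?thesis using Bv ab i Ladj_intros \<open>b = True\<close> \<open>a = 3*i+1\<close>
          by (intro exI[of _ "Fv (Suc i)"]) auto
      next
        case False then have "i = n - 1" using i by simp
        then show ?thesis using Bv ab i Ladj_intros Ladj_sym \<open>b = True\<close> \<open>a = 3*i+1\<close>
          by (intro exI[of _ "Rv"]) auto
      qed
    next
      assume "b = True" "a = 3*i-1" then show ?thesis using Bv ab i Ladj_intros Ladj_sym
        by (intro exI[of _ "Av i"]) auto
    next
      assume "b = False" "a = 3*i" then show ?thesis using Bv ab i Ladj_intros
        by (intro exI[of _ "Cv i"]) auto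
    qed
  next
    case (Cv i)
    then have i: "1 \<le> i" "i < n" using u by auto
    have "(b = False \<and> (a = 3*i+1 \<or> a = 3*i-1)) \<or> (b = True \<and> a = 3*i)"
      using l Cv ab i by (simp add: ladj_def mod3_facts) arith
    then show ?thesis
    proof (elim conjE disjE)
      assume "b = False" "a = 3*i+1"
      show ?thesis
      proof (cases "Suc i < n")
        case True then show ?thesis using Cv ab i Ladj_intros \<open>b = False\<close> \<open>a = 3*i+1\<close>
          by (intro exI[of _ "Ev (Suc i)"]) auto
      next
        case False then have "i = n - 1" using i by simp
        then show ?thesis using Cv ab i Ladj_intros Ladj_sym \<open>b = False\<close> \<open>a = 3*i+1\<close>
          by (intro exI[of _ "Sv"]) auto
      qed
    next
      assume "b = False" "a = 3*i-1" then show ?thesis using Cv ab i Ladj_intros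
        by (intro exI[of _ "Dv i"]) auto
    next
      assume "b = True" "a = 3*i" then show ?thesis using Cv ab i Ladj_intros Ladj_sym
        by (intro exI[of _ "Bv i"]) auto
    qed
  next
    case (Ev i)
    then have i: "1 \<le> i" "i < n" using u by auto
    have "(b = False \<and> (a = 3*i-1 \<or> a + 3 = 3*i)) \<or> (b = True \<and> a = 3*i-2)"
      using l Ev ab i by (simp add: ladj_def mod3_facts) arith
    then show ?thesis
    proof (elim conjE disjE)
      assume "b = False" "a + 3 = 3*i"
      show ?thesis
      proof (cases "i = 1")
        case False
        then obtain j where j: "i = Suc j" "1 \<le> j" using i by (cases i) auto
        then show ?thesis using Ev ab i Ladj_intros(8)[of j n] Ladj_sym \<open>b = False\<close> \<open>a + 3 = 3*i\<close>
          by (intro exI[of _ "Cv j"]) auto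
      next
        case True
        then show ?thesis using Ev ab i Ladj_intros Ladj_sym \<open>b = False\<close> \<open>a + 3 = 3*i\<close>
          by (intro exI[of _ "Qv"]) auto
      qed
    next
      assume "b = False" "a = 3*i-1" then show ?thesis using Ev ab i Ladj_intros Ladj_sym
        by (intro exI[of _ "Dv i"]) auto
    next
      assume "b = True" "a = 3*i-2" then show ?thesis using Ev ab i Ladj_intros
        by (intro exI[of _ "Fv i"]) auto
    qed
  next
    case (Fv i)
    then have i: "1 \<le> i" "i < n" using u by auto
    have "(b = True \<and> (a = 3*i-1 \<or> a + 3 = 3*i)) \<or> (b = False \<and> a = 3*i-2)"
      using l Fv ab i by (simp add: ladj_def mod3_facts) arith
    then show ?thesis
    proof (elim conjE disjE)
      assume "b = True" "a + 3 = 3*i"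
      show ?thesis
      proof (cases "i = 1")
        case False
        then obtain j where j: "i = Suc j" "1 \<le> j" using i by (cases i) auto
        then show ?thesis using Fv ab i Ladj_intros(7)[of j n] Ladj_sym \<open>b = True\<close> \<open>a + 3 = 3*i\<close>
          by (intro exI[of _ "Bv j"]) auto
      next
        case True
        then show ?thesis using Fv ab i Ladj_intros Ladj_sym \<open>b = True\<close> \<open>a + 3 = 3*i\<close>
          by (intro exI[of _ "Pv"]) auto
      qed
    next
      assume "b = True" "a = 3*i-1" then show ?thesis using Fv ab i Ladj_intros
        by (intro exI[of _ "Av i"]) auto
    next
      assume "b = False" "a = 3*i-2" then show ?thesis using Fv ab i Ladj_intros Ladj_sym
        by (intro exI[of _ "Ev i"]) auto
    qed
  next
    case Pv
    have "(b = True \<and> a = 1) \<or> (b = False \<and> a = 0)" using l Pv ab by (auto simp: ladj_def)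
    then show ?thesis
    proof (elim conjE disjE)
      assume "b = True" "a = 1" then show ?thesis using Pv ab n Ladj_intros
        by (intro exI[of _ "Fv 1"]) auto
    next
      assume "b = False" "a = 0" then show ?thesis using Pv ab Ladj_intros
        by (intro exI[of _ "Qv"]) auto
    qed
  next
    case Qv
    have "(b = False \<and> a = 1) \<or> (b = True \<and> a = 0)" using l Qv ab by (auto simp: ladj_def)
    then show ?thesis
    proof (elim conjE disjE)
      assume "b = False" "a = 1" then show ?thesis using Qv ab n Ladj_intros
        by (intro exI[of _ "Ev 1"]) auto
    next
      assume "b = True" "a = 0" then show ?thesis using Qv ab Ladj_intros Ladj_sym
        by (intro exI[of _ "Pv"]) auto
    qed
  next
    case Rv
    have "(b = True \<and> a = 3*n-3) \<or> (b = False \<and> a = 3*n-2)"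
      using l Rv ab am n by (simp add: ladj_def mod3_facts) arith
    then show ?thesis
    proof (elim conjE disjE)
      assume "b = True" "a = 3*n-3" then show ?thesis using Rv ab n Ladj_intros
        by (intro exI[of _ "Bv (n-1)"]) (auto simp: diff_mult_distrib2)
    next
      assume "b = False" "a = 3*n-2" then show ?thesis using Rv ab Ladj_intros
        by (intro exI[of _ "Sv"]) auto
    qed
  next
    case Sv
    have "(b = False \<and> a = 3*n-3) \<or> (b = True \<and> a = 3*n-2)"
      using l Sv ab am n by (simp add: ladj_def mod3_facts) arith
    then show ?thesis
    proof (elim conjE disjE)
      assume "b = False" "a = 3*n-3" then show ?thesis using Sv ab n Ladj_intros
        by (intro exI[of _ "Cv (n-1)"]) (auto simp: diff_mult_distrib2)
    next
      assume "b = True" "a = 3*n-2" then show ?thesis using Sv ab Ladj_intros Ladj_sym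
        by (intro exI[of _ "Rv"]) auto
    qed
  qed
qed

lemma ladj_sym: "ladj x y = ladj y x" unfolding ladj_def by auto

lemma Ladj_iff:
  assumes n: "n \<ge> 2" and u: "vok n u" and v: "vok n v"
  shows "Ladj n u v = ladj (lpos n u) (lpos n v)"
proof
  assume "Ladj n u v"
  then show "ladj (lpos n u) (lpos n v)"
    unfolding Ladj_def using Ledges_ladj[OF n] ladj_sym by blast
next
  assume l: "ladj (lpos n u) (lpos n v)"
  obtain w where w: "vok n w" "Ladj n u w" "lpos n w = lpos n v"
    using nbr[OF n u lpos_into[OF n v] l] by blast
  then have "w = v" using lpos_inj0[OF n w(1) v] by simp
  then show "Ladj n u v" using w by simp
qed

lemma sum_bij_filter:
  assumes "bij_betw f V W"
  shows "(\<Sum>x\<in>{v\<in>V. P (f v)}. g (f x)) = (\<Sum>a\<in>{a\<in>W. P a}. g a)"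
proof -
  have inj: "inj_on f {v\<in>V. P (f v)}" using assms by (auto simp: bij_betw_def intro: inj_on_subset)
  have "{a\<in>W. P a} = f ` {v\<in>V. P (f v)}" using assms by (auto simp: bij_betw_def)
  then show ?thesis using sum.reindex[OF inj, of g] by (simp add: comp_def)
qed

definition P2 :: "nat \<Rightarrow> nat set" where "P2 m = {p. p \<le> m \<and> (p = 0 \<or> p = m \<or> p mod 3 = 2)}"
definition P3 :: "nat \<Rightarrow> nat set" where "P3 m = {p. 0 < p \<and> p < m \<and> p mod 3 \<noteq> 2}"

lemma ldeg_sets:
  assumes m: "m mod 3 = 1"
  shows "{a \<in> LW m. gdeg (LW m) ladj a = 2} = P2 m \<times> (UNIV::bool set)"
    and "{a \<in> LW m. gdeg (LW m) ladj a = 3} = P3 m \<times> (UNIV::bool set)"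
proof -
  have m0: "m \<noteq> 0" using m by auto
  show "{a \<in> LW m. gdeg (LW m) ladj a = 2} = P2 m \<times> (UNIV::bool set)"
  proof (intro set_eqI iffI)
    fix a assume "a \<in> {a \<in> LW m. gdeg (LW m) ladj a = 2}"
    then show "a \<in> P2 m \<times> (UNIV::bool set)" using ladder_deg[OF m, of "fst a" "snd a"]
      by (auto simp: P2_def LW_def split: if_splits)
  next
    fix a assume "a \<in> P2 m \<times> (UNIV::bool set)"
    then show "a \<in> {a \<in> LW m. gdeg (LW m) ladj a = 2}" using ladder_deg[OF m, of "fst a" "snd a"]
      by (auto simp: P2_def LW_def)
  qed
  show "{a \<in> LW m. gdeg (LW m) ladj a = 3} = P3 m \<times> (UNIV::bool set)"
  proof (intro set_eqI iffI)
    fix a assume "a \<in> {a \<in> LW m. gdeg (LW m) ladj a = 3}"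
    then show "a \<in> P3 m \<times> (UNIV::bool set)" using ladder_deg[OF m, of "fst a" "snd a"]
      by (auto simp: P3_def LW_def split: if_splits)
  next
    fix a assume "a \<in> P3 m \<times> (UNIV::bool set)"
    then show "a \<in> {a \<in> LW m. gdeg (LW m) ladj a = 3}" using ladder_deg[OF m, of "fst a" "snd a"]
      by (auto simp: P3_def LW_def)
  qed
qed

lemma reduce_to_ladder:
  assumes n: "n \<ge> 2"
  shows "base_poly (Lverts n) (Ladj n) 2 3 =
    (\<Sum>a\<in>P2 (3*n-2) \<times> (UNIV::bool set). \<Sum>b\<in>P3 (3*n-2) \<times> (UNIV::bool set). monom 1 (ldist a b))"
proof -
  define m where "m = 3*n-2"
  have m: "m mod 3 = 1" unfolding m_def using mod3_facts(1)[of n] n by simp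
  have bij: "bij_betw (lpos n) (Lverts n) (LW m)" unfolding m_def using lpos_bij[OF n] .
  have adj: "\<And>x y. x \<in> Lverts n \<Longrightarrow> y \<in> Lverts n \<Longrightarrow> Ladj n x y = ladj (lpos n x) (lpos n y)"
    using Ladj_iff[OF n] by (simp add: Lverts_iff)
  have into: "\<And>x. x \<in> Lverts n \<Longrightarrow> lpos n x \<in> LW m"
    using bij by (auto simp: bij_betw_def)
  have gd: "gdist (Lverts n) (Ladj n) x y = ldist (lpos n x) (lpos n y)"
    if "x \<in> Lverts n" "y \<in> Lverts n" for x y
    using gdist_iso[where f="lpos n" and E="Ladj n" and E'=ladj, OF bij adj that] ladder_gdist[OF m into[OF that(1)] into[OF that(2)]] by simp
  have deg: "gdeg (Lverts n) (Ladj n) x = gdeg (LW m) ladj (lpos n x)" if "x \<in> Lverts n" for x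
    using gdeg_iso[where f="lpos n" and E="Ladj n" and E'=ladj, OF bij adj that] by simp
  have sym: "gdist (Lverts n) (Ladj n) x y = gdist (Lverts n) (Ladj n) y x"
    if "x \<in> Lverts n" "y \<in> Lverts n" for x y
    using gd that ldist_sym by metis
  have s2: "{v \<in> Lverts n. gdeg (Lverts n) (Ladj n) v = k} = {v \<in> Lverts n. gdeg (LW m) ladj (lpos n v) = k}" for k
    using deg by auto
  have "base_poly (Lverts n) (Ladj n) 2 3 =
     (\<Sum>x\<in>{v \<in> Lverts n. gdeg (LW m) ladj (lpos n v) = 2}. \<Sum>y\<in>{v \<in> Lverts n. gdeg (LW m) ladj (lpos n v) = 3}.
        monom 1 (ldist (lpos n x) (lpos n y)))"
    unfolding base_poly_split[of 2 3 "Lverts n" "Ladj n", OF _ sym, simplified] s2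
    by (intro sum.cong refl) (simp add: gd)
  also have "\<dots> = (\<Sum>x\<in>{v \<in> Lverts n. gdeg (LW m) ladj (lpos n v) = 2}. \<Sum>b\<in>{b \<in> LW m. gdeg (LW m) ladj b = 3}.
        monom 1 (ldist (lpos n x) b))"
    by (intro sum.cong refl sum_bij_filter[OF bij])
  also have "\<dots> = (\<Sum>a\<in>{a \<in> LW m. gdeg (LW m) ladj a = 2}. \<Sum>b\<in>{b \<in> LW m. gdeg (LW m) ladj b = 3}.
        monom 1 (ldist a b))"
    by (rule sum_bij_filter[OF bij])
  also have "\<dots> = (\<Sum>a\<in>P2 m \<times> (UNIV::bool set). \<Sum>b\<in>P3 m \<times> (UNIV::bool set). monom 1 (ldist a b))"
    using ldeg_sets[OF m] by simp
  finally show ?thesis unfolding m_def .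
qed



definition hm :: "nat \<Rightarrow> nat \<Rightarrow> nat poly" where "hm c d = monom c d + monom c (Suc d)"

lemma monom_dbl: "monom (a + b) d = monom a d + (monom b d :: nat poly)"
  by (simp add: add_monom)

lemma sum_monom_split:
  assumes "\<And>k. k \<in> A \<Longrightarrow> c k = d k + e k"
  shows "(\<Sum>k\<in>A. monom (c k) (f k)) = (\<Sum>k\<in>A. monom (d k) (f k)) + (\<Sum>k\<in>A. (monom (e k) (f k) :: nat poly))"
  by (simp add: sum.distrib[symmetric] add_monom assms)

lemma sum_monom_const_split:
  "(\<Sum>k\<in>A. monom (a + b) (f k)) = (\<Sum>k\<in>A. monom a (f k)) + (\<Sum>k\<in>A. (monom b (f k) :: nat poly))"
  by (simp add: sum.distrib[symmetric] add_monom)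

lemma RA_step:
  assumes n: "n \<ge> 2"
  shows "(\<Sum>k = 2..Suc n - 1. monom (4 * (Suc n - k + 2)) (3 * k - 2)) =
     (\<Sum>k = 2..n - 1. monom (4 * (n - k + 2)) (3 * k - 2)) + (\<Sum>k = 2..n - 1. monom 4 (3 * k - 2))
     + (monom 12 (3 * n - 2) :: nat poly)"
proof -
  have s: "{2..Suc n - 1} = insert n {2..n - 1}" using n by auto
  have "(\<Sum>k = 2..Suc n - 1. monom (4 * (Suc n - k + 2)) (3 * k - 2)) =
     monom 12 (3 * n - 2) + (\<Sum>k = 2..n - 1. monom (4 * (Suc n - k + 2)) (3 * k - 2) :: nat poly)"
    unfolding s by (subst sum.insert) auto
  also have "(\<Sum>k = 2..n - 1. monom (4 * (Suc n - k + 2)) (3 * k - 2)) =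
     (\<Sum>k = 2..n - 1. monom (4 * (n - k + 2)) (3 * k - 2)) + (\<Sum>k = 2..n - 1. (monom 4 (3 * k - 2) :: nat poly))"
    by (rule sum_monom_split) auto
  finally show ?thesis by (simp add: ac_simps)
qed

lemma RB_step:
  assumes n: "n \<ge> 2"
  shows "(\<Sum>k = 1..Suc n - 1. monom (4 * (2 * Suc n - 2 * k)) (3 * k - 1)) =
     (\<Sum>k = 1..n - 1. monom (4 * (2 * n - 2 * k)) (3 * k - 1)) + (\<Sum>k = 1..n - 1. monom 8 (3 * k - 1))
     + (monom 8 (3 * n - 1) :: nat poly)"
proof -
  have s: "{1..Suc n - 1} = insert n {1..n - 1}" using n by auto
  have "(\<Sum>k = 1..Suc n - 1. monom (4 * (2 * Suc n - 2 * k)) (3 * k - 1)) =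
     monom 8 (3 * n - 1) + (\<Sum>k = 1..n - 1. monom (4 * (2 * Suc n - 2 * k)) (3 * k - 1) :: nat poly)"
    unfolding s by (subst sum.insert) auto
  also have "(\<Sum>k = 1..n - 1. monom (4 * (2 * Suc n - 2 * k)) (3 * k - 1)) =
     (\<Sum>k = 1..n - 1. monom (4 * (2 * n - 2 * k)) (3 * k - 1)) + (\<Sum>k = 1..n - 1. (monom 8 (3 * k - 1) :: nat poly))"
    by (rule sum_monom_split) auto
  finally show ?thesis by (simp add: ac_simps)
qed

lemma RC_step:
  assumes n: "n \<ge> 2"
  shows "(\<Sum>k = 1..Suc n - 1. monom (4 * (Suc n - k)) (3 * k)) =
     (\<Sum>k = 1..n - 1. monom (4 * (n - k)) (3 * k)) + (\<Sum>k = 1..n - 1. monom 4 (3 * k))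
     + (monom 4 (3 * n) :: nat poly)"
proof -
  have s: "{1..Suc n - 1} = insert n {1..n - 1}" using n by auto
  have "(\<Sum>k = 1..Suc n - 1. monom (4 * (Suc n - k)) (3 * k)) =
     monom 4 (3 * n) + (\<Sum>k = 1..n - 1. monom (4 * (Suc n - k)) (3 * k) :: nat poly)"
    unfolding s by (subst sum.insert) auto
  also have "(\<Sum>k = 1..n - 1. monom (4 * (Suc n - k)) (3 * k)) =
     (\<Sum>k = 1..n - 1. monom (4 * (n - k)) (3 * k)) + (\<Sum>k = 1..n - 1. (monom 4 (3 * k) :: nat poly))"
    by (rule sum_monom_split) auto
  finally show ?thesis by (simp add: ac_simps)
qed

definition Xs :: "nat \<Rightarrow> nat poly" where
  "Xs n = (\<Sum>k<n-1. hm 2 (3*k+1) + (\<Sum>j<k. hm 2 (3*j+2))) + (\<Sum>k\<in>{1..<n}. hm 2 (3*k) + (\<Sum>j<k. hm 2 (3*j+1)))"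

lemma Xs_step:
  assumes n: "n \<ge> 2"
  shows "Xs (Suc n) = Xs n + (hm 2 (3*n-2) + (\<Sum>j<n-1. hm 2 (3*j+2))) + (hm 2 (3*n) + (\<Sum>j<n. hm 2 (3*j+1)))"
proof -
  have e: "Suc n - 1 = Suc (n - 1)" using n by simp
  have t: "3 * (n - 1) + 1 = 3 * n - 2" using n by simp
  show ?thesis unfolding Xs_def e sum.lessThan_Suc t
    using sum.atLeastLessThan_Suc[of 1 n "\<lambda>k. hm 2 (3*k) + (\<Sum>j<k. hm 2 (3*j+1))"] n
    by (simp add: ac_simps)
qed

lemma shift2: "(\<Sum>k = 2..(N::nat). g k) = (\<Sum>j<N-1. g (j + 2))"
  by (rule sum.reindex_bij_witness[of _ "\<lambda>j. j + 2" "\<lambda>k. k - 2"]) (auto intro!: arg_cong[where f=g])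

lemma shift1: "(\<Sum>k = 1..(N::nat). g k) = (\<Sum>j<N. g (Suc j))"
  by (rule sum.reindex_bij_witness[of _ "\<lambda>j. Suc j" "\<lambda>k. k - 1"]) auto

lemma D_ident:
  assumes n: "n \<ge> 2"
  shows "(hm 2 (3*n-2) + (\<Sum>j<n-1. hm 2 (3*j+2))) + (hm 2 (3*n) + (\<Sum>j<n. hm 2 (3*j+1)))
       + ((hm 2 (3*n-2) + (\<Sum>j<n-1. hm 2 (3*j+2))) + (hm 2 (3*n) + (\<Sum>j<n. hm 2 (3*j+1))))
       + monom 4 (3*n-2) =
     monom 4 1 + (\<Sum>k = 2..n - 1. monom 4 (3 * k - 2)) + monom 12 (3 * n - 2)
     + (\<Sum>k = 1..n - 1. monom 8 (3 * k - 1)) + monom 8 (3 * n - 1)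
     + (\<Sum>k = 1..n - 1. monom 4 (3 * k)) + monom 4 (3 * n) + monom 4 (3 * n + 1)"
proof -
  define m1 where "m1 = (monom 2 1 :: nat poly)"
  define T1 where "T1 = (\<Sum>k = 2..n - 1. (monom 2 (3 * k - 2) :: nat poly))"
  define E1 where "E1 = (monom 2 (3 * n - 2) :: nat poly)"
  define T2 where "T2 = (\<Sum>j<n-1. (monom 2 (3 * j + 2) :: nat poly))"
  define E2 where "E2 = (monom 2 (3 * n - 1) :: nat poly)"
  define T3 where "T3 = (\<Sum>j<n-1. (monom 2 (Suc (3 * j + 2)) :: nat poly))"
  define E3 where "E3 = (monom 2 (3 * n) :: nat poly)"
  define E4 where "E4 = (monom 2 (3 * n + 1) :: nat poly)"
  have n1: "n = Suc (n - 1)" using n by simp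
  have e: "Suc (3*n-2) = 3*n-1" using n by arith
  have h1: "hm 2 (3*n-2) = E1 + E2" unfolding hm_def E1_def E2_def e by (rule refl)
  have h2: "hm 2 (3*n) = E3 + E4" unfolding hm_def E3_def E4_def by simp
  have h3: "(\<Sum>j<n-1. hm 2 (3*j+2)) = T2 + T3" unfolding hm_def T2_def T3_def
    by (rule sum.distrib)
  have a1: "(\<Sum>j<n. (monom 2 (3*j+1) :: nat poly)) = m1 + T1 + E1"
  proof -
    have "(\<Sum>j<n. (monom 2 (3*j+1) :: nat poly)) = (\<Sum>j<Suc (n-1). monom 2 (3*j+1))" using n1 by simp
    also have "\<dots> = m1 + (\<Sum>j<n-1. monom 2 (3*j+4))" unfolding sum.lessThan_Suc_shift m1_def by (simp add: ac_simps)
    also have "(\<Sum>j<n-1. (monom 2 (3*j+4) :: nat poly)) = T1 + E1"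
    proof -
      have "n - 1 = Suc (n - 2)" using n by simp
      then have "(\<Sum>j<n-1. (monom 2 (3*j+4) :: nat poly)) = (\<Sum>j<n-2. monom 2 (3*j+4)) + monom 2 (3*(n-2)+4)"
        by simp
      also have "3*(n-2)+4 = 3*n-2" using n by simp
      also have "(\<Sum>j<n-2. (monom 2 (3*j+4) :: nat poly)) = T1"
        unfolding T1_def shift2 by (intro sum.cong) (auto simp: algebra_simps)
      finally show ?thesis unfolding E1_def .
    qed
    finally show ?thesis by (simp add: ac_simps)
  qed
  have a2: "(\<Sum>j<n. (monom 2 (3*j+2) :: nat poly)) = T2 + E2"
  proof -
    have "(\<Sum>j<n. (monom 2 (3*j+2) :: nat poly)) = (\<Sum>j<Suc (n-1). monom 2 (3*j+2))" using n1 by simp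
    also have "\<dots> = T2 + monom 2 (3*(n-1)+2)" unfolding T2_def by simp
    also have "3*(n-1)+2 = 3*n-1" using n by simp
    finally show ?thesis unfolding E2_def .
  qed
  have h4: "(\<Sum>j<n. hm 2 (3*j+1)) = m1 + T1 + E1 + T2 + E2"
  proof -
    have "(\<Sum>j<n. hm 2 (3*j+1)) = (\<Sum>j<n. (monom 2 (3*j+1) :: nat poly)) + (\<Sum>j<n. monom 2 (3*j+2))"
      unfolding hm_def sum.distrib[symmetric] by (intro sum.cong) auto
    then show ?thesis unfolding a1 a2 by (simp only: ac_simps)
  qed
  have r1: "monom 4 1 = m1 + m1" unfolding m1_def by (simp add: add_monom)
  have r2: "(\<Sum>k = 2..n - 1. (monom 4 (3 * k - 2) :: nat poly)) = T1 + T1"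
    unfolding T1_def by (simp add: sum.distrib[symmetric] add_monom)
  have r3: "monom 12 (3 * n - 2) = E1 + E1 + E1 + E1 + E1 + E1" unfolding E1_def by (simp add: add_monom)
  have r4: "(\<Sum>k = 1..n - 1. (monom 8 (3 * k - 1) :: nat poly)) = T2 + T2 + T2 + T2"
  proof -
    have "(\<Sum>k = 1..n - 1. (monom 8 (3 * k - 1) :: nat poly)) = (\<Sum>j<n-1. monom 8 (3*j+2))"
      unfolding shift1 by (intro sum.cong refl arg_cong[where f="monom 8"]) auto
    then show ?thesis unfolding T2_def by (simp add: sum.distrib[symmetric] add_monom)
  qed
  have r5: "monom 8 (3 * n - 1) = E2 + E2 + E2 + E2" unfolding E2_def by (simp add: add_monom)
  have r6: "(\<Sum>k = 1..n - 1. (monom 4 (3 * k) :: nat poly)) = T3 + T3"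
  proof -
    have "(\<Sum>k = 1..n - 1. (monom 4 (3 * k) :: nat poly)) = (\<Sum>j<n-1. monom 4 (Suc (3*j+2)))"
      unfolding shift1 by (intro sum.cong refl arg_cong[where f="monom 4"]) auto
    then show ?thesis unfolding T3_def by (simp add: sum.distrib[symmetric] add_monom)
  qed
  have r7: "monom 4 (3 * n) = E3 + E3" unfolding E3_def by (simp add: add_monom)
  have r8: "monom 4 (3 * n + 1) = E4 + E4" unfolding E4_def by (simp add: add_monom)
  have r9: "monom 4 (3 * n - 2) = E1 + E1" unfolding E1_def by (simp add: add_monom)
  show ?thesis unfolding h1 h2 h3 h4 r1 r2 r3 r4 r5 r6 r7 r8 r9
    by (simp only: ac_simps)
qed

definition Rs :: "nat \<Rightarrow> nat poly" where
  "Rs n = monom (4 * n) 1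
         + (\<Sum>k = 2..n-1. monom (4 * (n - k + 2)) (3 * k - 2))
         + (\<Sum>k = 1..n-1. monom (4 * (2 * n - 2 * k)) (3 * k - 1))
         + (\<Sum>k = 1..n-1. monom (4 * (n - k)) (3 * k))
         + monom 4 (3 * n - 2)"

lemma Rs_step:
  assumes n: "n \<ge> 2"
  shows "Rs (Suc n) + monom 4 (3*n-2) = Rs n +
     (monom 4 1 + (\<Sum>k = 2..n - 1. monom 4 (3 * k - 2)) + monom 12 (3 * n - 2)
     + (\<Sum>k = 1..n - 1. monom 8 (3 * k - 1)) + monom 8 (3 * n - 1)
     + (\<Sum>k = 1..n - 1. monom 4 (3 * k)) + monom 4 (3 * n) + monom 4 (3 * n + 1))"
proof -
  have a: "monom (4 * Suc n) 1 = monom (4 * n) 1 + (monom 4 1 :: nat poly)" by (simp add: add_monom)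
  have b: "3 * Suc n - 2 = 3 * n + 1" by simp
  show ?thesis unfolding Rs_def RA_step[OF n] RB_step[OF n] RC_step[OF n] a b
    by (simp only: ac_simps)
qed

lemma final_ident:
  assumes "n \<ge> 2"
  shows "Xs n + Xs n = Rs n"
  using assms
proof (induction n rule: nat_induct_at_least)
  case base
  have s1: "{1..<2::nat} = {1}" by auto
  have s2: "{..<2-1::nat} = {0}" by auto
  have s3: "{2..2-1::nat} = {}" by auto
  have s4: "{1..2-1::nat} = {1}" by auto
  have x: "Xs 2 = hm 2 1 + (hm 2 3 + hm 2 1)" unfolding Xs_def s1 s2 by simp
  have r: "Rs 2 = monom 8 1 + monom 8 2 + monom 4 3 + monom 4 4" unfolding Rs_def s3 s4 by simp
  show ?case unfolding x r hm_def by (simp add: poly_eq_iff)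
next
  case (Suc n)
  let ?D = "(hm 2 (3*n-2) + (\<Sum>j<n-1. hm 2 (3*j+2))) + (hm 2 (3*n) + (\<Sum>j<n. hm 2 (3*j+1)))"
  have "Xs (Suc n) + Xs (Suc n) + monom 4 (3*n-2) = (Xs n + Xs n) + (?D + ?D + monom 4 (3*n-2))"
    unfolding Xs_step[OF Suc(1)] by (simp only: ac_simps)
  also have "\<dots> = Rs (Suc n) + monom 4 (3*n-2)"
    unfolding Suc(2) D_ident[OF Suc(1)] Rs_step[OF Suc(1)] ..
  finally show ?case by simp
qed



lemma mod_sub_lemma:
  assumes pm: "p \<le> (m::nat)" and m: "m mod 3 = 1"
  shows "(m - p) mod 3 = (if p mod 3 = 0 then 1 else if p mod 3 = 1 then 0 else 2)"
proof -
  define a where "a = m div 3"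
  define b where "b = p div 3"
  have m': "m = 3*a + 1" unfolding a_def using m by (metis div_mult_mod_eq mult.commute)
  have p': "p = 3*b + p mod 3" unfolding b_def by (metis div_mult_mod_eq mult.commute)
  consider "p mod 3 = 0" | "p mod 3 = 1" | "p mod 3 = 2" by arith
  then show ?thesis
  proof cases
    case 1
    then have "m - p = 3*(a - b) + 1" using m' p' pm by arith
    then show ?thesis using 1 by simp
  next
    case 2
    then have "m - p = 3*(a - b)" using m' p' pm by arith
    then show ?thesis using 2 by simp
  next
    case 3
    then have "m - p = 3*(a - b - 1) + 2" using m' p' pm by arith
    then show ?thesis using 3 by (simp add: mod_Suc)
  qed
qed

lemma sum_bool: "(\<Sum>x\<in>A \<times> (UNIV::bool set). f x) = (\<Sum>a\<in>A. f (a, False) + f (a, True))"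
proof -
  have "(\<Sum>a\<in>A. \<Sum>b\<in>(UNIV::bool set). f (a, b)) = (\<Sum>(a, b)\<in>A \<times> UNIV. f (a, b))"
    by (rule sum.cartesian_product)
  then show ?thesis by (simp add: UNIV_bool)
qed

lemma P2P3_disj: "m mod 3 = 1 \<Longrightarrow> p \<in> P2 m \<Longrightarrow> q \<in> P3 m \<Longrightarrow> p \<noteq> q"
  unfolding P2_def P3_def by auto

lemma ladder_sum1:
  assumes m: "m mod 3 = 1"
  shows "(\<Sum>a\<in>P2 m \<times> (UNIV::bool set). \<Sum>b\<in>P3 m \<times> (UNIV::bool set). monom 1 (ldist a b))
       = (\<Sum>p\<in>P2 m. \<Sum>q\<in>P3 m. hm 2 (ndist p q))"
proof -
  have key: "monom 1 (ldist (p, False) (q, False)) + monom 1 (ldist (p, False) (q, True)) +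
      (monom 1 (ldist (p, True) (q, False)) + monom 1 (ldist (p, True) (q, True))) = hm 2 (ndist p q)"
    if "p \<in> P2 m" "q \<in> P3 m" for p q
  proof -
    have "p \<noteq> q" using P2P3_disj[OF m that] .
    then show ?thesis by (simp add: ldist_def hm_def poly_eq_iff)
  qed
  show ?thesis unfolding sum_bool sum.distrib[symmetric]
    by (intro sum.cong refl key)
qed

definition Qs :: "nat \<Rightarrow> nat set" where "Qs q = {p. p < q \<and> (p = 0 \<or> p mod 3 = 2)}"

lemma P3_mem_refl: assumes m: "m mod 3 = 1" and q: "q \<in> P3 m" shows "m - q \<in> P3 m"
proof -
  have "0 < q" "q < m" "q mod 3 \<noteq> 2" using q by (auto simp: P3_def)
  moreover have "(m - q) mod 3 \<noteq> 2" using mod_sub_lemma[of q m] m \<open>q < m\<close> \<open>q mod 3 \<noteq> 2\<close> by auto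
  ultimately show ?thesis by (auto simp: P3_def)
qed

lemma reflect:
  fixes g :: "nat \<Rightarrow> 'a::comm_monoid_add"
  assumes m: "m mod 3 = 1"
  shows "(\<Sum>p\<in>P2 m. \<Sum>q\<in>P3 m. g (ndist p q)) = (\<Sum>q\<in>P3 m. \<Sum>p\<in>Qs q. g (q - p)) + (\<Sum>q\<in>P3 m. \<Sum>p\<in>Qs q. g (q - p))"
proof -
  have fin2: "finite (P2 m)" by (rule finite_subset[of _ "{..m}"]) (auto simp: P2_def)
  have "(\<Sum>p\<in>P2 m. \<Sum>q\<in>P3 m. g (ndist p q)) = (\<Sum>q\<in>P3 m. \<Sum>p\<in>P2 m. g (ndist p q))" by (rule sum.swap)
  also have "\<dots> = (\<Sum>q\<in>P3 m. (\<Sum>p\<in>Qs q. g (q - p)) + (\<Sum>p\<in>{p\<in>P2 m. q < p}. g (p - q)))"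
  proof (rule sum.cong[OF refl])
    fix q assume q: "q \<in> P3 m"
    then have q': "0 < q" "q < m" "q mod 3 \<noteq> 2" by (auto simp: P3_def)
    have sp: "P2 m = Qs q \<union> {p\<in>P2 m. q < p}"
    proof (intro set_eqI iffI)
      fix p assume p: "p \<in> P2 m"
      have "p \<noteq> q" using P2P3_disj[OF m p q] .
      then show "p \<in> Qs q \<union> {p\<in>P2 m. q < p}" using p q' by (auto simp: P2_def Qs_def)
    next
      fix p assume "p \<in> Qs q \<union> {p\<in>P2 m. q < p}"
      then show "p \<in> P2 m" using q' by (auto simp: P2_def Qs_def)
    qed
    have finQ: "finite (Qs q)" by (rule finite_subset[of _ "{..<q}"]) (auto simp: Qs_def)
    have "(\<Sum>p\<in>P2 m. g (ndist p q)) = (\<Sum>p\<in>Qs q. g (ndist p q)) + (\<Sum>p\<in>{p\<in>P2 m. q < p}. g (ndist p q))"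
      by (subst sp, rule sum.union_disjoint) (use finQ fin2 in \<open>auto simp: Qs_def\<close>)
    also have "(\<Sum>p\<in>Qs q. g (ndist p q)) = (\<Sum>p\<in>Qs q. g (q - p))"
      by (intro sum.cong refl) (auto simp: Qs_def ndist_def)
    also have "(\<Sum>p\<in>{p\<in>P2 m. q < p}. g (ndist p q)) = (\<Sum>p\<in>{p\<in>P2 m. q < p}. g (p - q))"
      by (intro sum.cong refl) (auto simp: ndist_def)
    finally show "(\<Sum>p\<in>P2 m. g (ndist p q)) = (\<Sum>p\<in>Qs q. g (q - p)) + (\<Sum>p\<in>{p\<in>P2 m. q < p}. g (p - q))" .
  qed
  also have "\<dots> = (\<Sum>q\<in>P3 m. \<Sum>p\<in>Qs q. g (q - p)) + (\<Sum>q\<in>P3 m. \<Sum>p\<in>{p\<in>P2 m. q < p}. g (p - q))"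
    by (rule sum.distrib)
  also have "(\<Sum>q\<in>P3 m. \<Sum>p\<in>{p\<in>P2 m. q < p}. g (p - q)) = (\<Sum>q\<in>P3 m. \<Sum>p\<in>Qs q. g (q - p))"
  proof -
    have qq: "\<And>q. q \<in> P3 m \<Longrightarrow> m - (m - q) = q" by (auto simp: P3_def)
    have "(\<Sum>q\<in>P3 m. \<Sum>p\<in>{p\<in>P2 m. q < p}. g (p - q)) = (\<Sum>q\<in>P3 m. \<Sum>p\<in>{p\<in>P2 m. m - q < p}. g (p - (m - q)))"
      by (rule sum.reindex_bij_witness[of _ "\<lambda>q. m - q" "\<lambda>q. m - q"]; simp add: qq P3_mem_refl[OF m])
    also have "\<dots> = (\<Sum>q\<in>P3 m. \<Sum>p\<in>Qs q. g (q - p))"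
    proof (rule sum.cong[OF refl])
      fix q assume q: "q \<in> P3 m"
      then have q': "0 < q" "q < m" "q mod 3 \<noteq> 2" by (auto simp: P3_def)
      show "(\<Sum>p\<in>{p\<in>P2 m. m - q < p}. g (p - (m - q))) = (\<Sum>p\<in>Qs q. g (q - p))"
      proof (rule sum.reindex_bij_witness[of _ "\<lambda>p. m - p" "\<lambda>p. m - p"])
        fix p assume p: "p \<in> Qs q"
        then have p': "p < q" "p = 0 \<or> p mod 3 = 2" by (auto simp: Qs_def)
        show "m - (m - p) = p" using p' q' by simp
        have "m - p = m \<or> (m - p) mod 3 = 2"
          using p' q' mod_sub_lemma[of p m] m by auto
        then show "m - p \<in> {p \<in> P2 m. m - q < p}" using p' q' by (auto simp: P2_def)
      next
        fix p assume p: "p \<in> {p \<in> P2 m. m - q < p}"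
        then have p': "p \<le> m" "p = 0 \<or> p = m \<or> p mod 3 = 2" "m - q < p" by (auto simp: P2_def)
        show "m - (m - p) = p" using p' by simp
        have "m - p = 0 \<or> (m - p) mod 3 = 2"
          using p' mod_sub_lemma[of p m] m by auto
        then show "m - p \<in> Qs q" using p' q' by (auto simp: Qs_def)
        show "g (q - (m - p)) = g (p - (m - q))" using p' q' by (simp add: algebra_simps)
      qed
    qed
    finally show ?thesis .
  qed
  finally show ?thesis .
qed

lemma three_ne: "3 * k + 1 \<noteq> 3 * (j::nat)"
proof
  assume "3 * k + 1 = 3 * j"
  then have "(3 * k + 1) mod 3 = (3 * j) mod 3" by simp
  then show False by simp
qed

lemma P3_sum:
  assumes n: "n \<ge> 2"
  shows "(\<Sum>q\<in>P3 (3*n-2). F q) = (\<Sum>k<n-1. F (3*k+1)) + (\<Sum>k\<in>{1..<n}. F (3*k))"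
proof -
  have eq: "P3 (3*n-2) = (\<lambda>k. 3*k+1) ` {..<n-1} \<union> (\<lambda>k. 3*k) ` {1..<n}"
  proof (intro set_eqI iffI)
    fix q assume "q \<in> P3 (3*n-2)"
    then have q: "0 < q" "q < 3*n-2" "q mod 3 \<noteq> 2" by (auto simp: P3_def)
    have qd: "q = 3 * (q div 3) + q mod 3" by simp
    consider "q mod 3 = 0" | "q mod 3 = 1" using q(3) by arith
    then show "q \<in> (\<lambda>k. 3*k+1) ` {..<n-1} \<union> (\<lambda>k. 3*k) ` {1..<n}"
    proof cases
      case 1
      then have "q = 3 * (q div 3)" "1 \<le> q div 3" "q div 3 < n" using qd q by arith+
      then show ?thesis by (auto intro!: image_eqI[of q "\<lambda>k. 3*k" "q div 3"])
    next
      case 2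
      then have "q = 3 * (q div 3) + 1" "q div 3 < n - 1" using qd q by arith+
      then show ?thesis by (auto intro!: image_eqI[of q "\<lambda>k. 3*k+1" "q div 3"])
    qed
  next
    fix q assume "q \<in> (\<lambda>k. 3*k+1) ` {..<n-1} \<union> (\<lambda>k. 3*k) ` {1..<n}"
    then show "q \<in> P3 (3*n-2)" by (auto simp: P3_def)
  qed
  have disj: "(\<lambda>k. 3*k+1) ` {..<n-1} \<inter> (\<lambda>k. 3*k) ` {1..<n} = {}"
    using three_ne by blast
  have inj1: "inj_on (\<lambda>k::nat. 3*k+1) {..<n-1}" by (auto simp: inj_on_def)
  have inj2: "inj_on (\<lambda>k::nat. 3*k) {1..<n}" by (auto simp: inj_on_def)
  have "(\<Sum>q\<in>P3 (3*n-2). F q) = sum F ((\<lambda>k. 3*k+1) ` {..<n-1}) + sum F ((\<lambda>k. 3*k) ` {1..<n})"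
    unfolding eq by (rule sum.union_disjoint[OF _ _ disj]) auto
  also have "sum F ((\<lambda>k. 3*k+1) ` {..<n-1}) = (\<Sum>k<n-1. F (3*k+1))"
    by (subst sum.reindex[OF inj1]) (simp add: comp_def)
  also have "sum F ((\<lambda>k. 3*k) ` {1..<n}) = (\<Sum>k\<in>{1..<n}. F (3*k))"
    by (subst sum.reindex[OF inj2]) (simp add: comp_def)
  finally show ?thesis .
qed

lemma m32: "(3*x+2) mod 3 = (2::nat)" "Suc (Suc (3*x)) mod 3 = (2::nat)"
  by (simp_all add: mod_Suc)

lemma Qs_eq:
  assumes "0 < q" "q = 3*k \<or> q = 3*k+1"
  shows "Qs q = insert 0 ((\<lambda>j. 3*j+2) ` {..<k})"
proof (intro set_eqI iffI)
  fix p assume "p \<in> Qs q"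
  then have p: "p < q" "p = 0 \<or> p mod 3 = 2" by (auto simp: Qs_def)
  show "p \<in> insert 0 ((\<lambda>j. 3*j+2) ` {..<k})"
  proof (cases "p = 0")
    case False
    then have "p mod 3 = 2" using p by simp
    moreover have "p = 3 * (p div 3) + p mod 3" by simp
    ultimately have "p = 3 * (p div 3) + 2" "p div 3 < k" using p assms by arith+
    then show ?thesis by (auto intro!: image_eqI[of p "\<lambda>j. 3*j+2" "p div 3"])
  qed simp
next
  fix p assume "p \<in> insert 0 ((\<lambda>j. 3*j+2) ` {..<k})"
  then show "p \<in> Qs q" using assms by (auto simp: Qs_def m32)
qed

lemma Qs_sum:
  assumes "0 < q" "q = 3*k \<or> q = 3*k+1"
  shows "(\<Sum>p\<in>Qs q. G (q - p)) = G q + (\<Sum>j<k. G (q - (3*j+2)))"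
proof -
  have inj: "inj_on (\<lambda>j::nat. 3*j+2) {..<k}" by (auto simp: inj_on_def)
  have "(\<Sum>p\<in>Qs q. G (q - p)) = G (q - 0) + (\<Sum>p\<in>(\<lambda>j. 3*j+2) ` {..<k}. G (q - p))"
    unfolding Qs_eq[OF assms] by (rule sum.insert) auto
  also have "(\<Sum>p\<in>(\<lambda>j. 3*j+2) ` {..<k}. G (q - p)) = (\<Sum>j<k. G (q - (3*j+2)))"
    by (rule sum.reindex_cong[OF inj refl]) simp
  finally show ?thesis by simp
qed

lemma K1: "(\<Sum>p\<in>Qs (3*k+1). G (3*k+1 - p)) = G (3*k+1) + (\<Sum>j<k. G (3*j+2))"
proof -
  have "(\<Sum>p\<in>Qs (3*k+1). G (3*k+1 - p)) = G (3*k+1) + (\<Sum>j<k. G (3*k+1 - (3*j+2)))"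
    by (rule Qs_sum) auto
  also have "(\<Sum>j<k. G (3*k+1 - (3*j+2))) = (\<Sum>j<k. (\<lambda>i. G (3*i+2)) (k - Suc j))"
    by (intro sum.cong refl) (auto intro!: arg_cong[where f=G])
  also have "\<dots> = (\<Sum>j<k. G (3*j+2))" by (rule sum.nat_diff_reindex)
  finally show ?thesis .
qed

lemma K0: "1 \<le> k \<Longrightarrow> (\<Sum>p\<in>Qs (3*k). G (3*k - p)) = G (3*k) + (\<Sum>j<k. G (3*j+1))"
proof -
  assume k: "1 \<le> k"
  have "(\<Sum>p\<in>Qs (3*k). G (3*k - p)) = G (3*k) + (\<Sum>j<k. G (3*k - (3*j+2)))"
    by (rule Qs_sum) (use k in auto)
  also have "(\<Sum>j<k. G (3*k - (3*j+2))) = (\<Sum>j<k. (\<lambda>i. G (3*i+1)) (k - Suc j))"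
    by (intro sum.cong refl) (auto intro!: arg_cong[where f=G])
  also have "\<dots> = (\<Sum>j<k. G (3*j+1))" by (rule sum.nat_diff_reindex)
  finally show ?thesis .
qed

lemma Xs_eq:
  assumes n: "n \<ge> 2"
  shows "(\<Sum>q\<in>P3 (3*n-2). \<Sum>p\<in>Qs q. hm 2 (q - p)) = Xs n"
  unfolding P3_sum[OF n] Xs_def
  by (intro arg_cong2[where f="(+)"] sum.cong refl K1 K0) auto

theorem main_eq:
  assumes n: "n \<ge> 2"
  shows "base_poly (Lverts n) (Ladj n) 2 3 = Rs n"
proof -
  have m: "(3*n-2) mod 3 = 1" using n by (cases n) (auto simp: mod_Suc)
  have "base_poly (Lverts n) (Ladj n) 2 3 = (\<Sum>p\<in>P2 (3*n-2). \<Sum>q\<in>P3 (3*n-2). hm 2 (ndist p q))"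
    unfolding reduce_to_ladder[OF n] ladder_sum1[OF m] ..
  also have "\<dots> = Xs n + Xs n" unfolding reflect[OF m] Xs_eq[OF n] ..
  also have "\<dots> = Rs n" by (rule final_ident[OF n])
  finally show ?thesis .
qed


theorem theorem2p5:
  fixes n :: nat
  assumes "n \<ge> 2"
  shows "base_poly (Lverts n) (Ladj n) 2 3 =
           monom (4 * n) 1
         + (\<Sum>k = 2..n-1. monom (4 * (n - k + 2)) (3 * k - 2))
         + (\<Sum>k = 1..n-1. monom (4 * (2 * n - 2 * k)) (3 * k - 1))
         + (\<Sum>k = 1..n-1. monom (4 * (n - k)) (3 * k))
         + monom 4 (3 * n - 2)"
  using main_eq[OF assms] unfolding Rs_def .

end
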